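(* Let $M,N\in\mathbb{S}^{q+r}$ with $N\in\boldsymbol{\Pi}_{q,r}$. (a) Assume $N$ has at least one positive eigenvalue. Then $\mathcal{Z}_r(N)\subseteq\mathcal{Z}_r(M)$ if and only if $x^\top Mx\ge 0$ for all $x\in\mathbb{R}^{q+r}$ satisfying $x^\top Nx\ge 0$. (b) Assume $N_{22}<0$. Then $\mathcal{Z}_r(N)\subseteq\mathcal{Z}_r^+(M)$ if and only if $x^\top Mx>0$ for all nonzero $x\in\mathbb{R}^{q+r}$ satisfying $x^\top Nx\ge 0$.
   Context: $\mathbb{S}^k$ denotes the real symmetric $k\times k$ matrices; for symmetric matrices, $A\ge 0$ ($A>0$) means positive semidefinite (definite), $A<0$ negative definite. $A^\dagger$ is the Moore–Penrose pseudo-inverse. Any $N\in\mathbb{S}^{q+r}$ is partitioned as $N=\begin{bmatrix}N_{11}&N_{12}\\ N_{21}&N_{22}\end{bmatrix}$ with $N_{11}\in\mathbb{S}^q$, $N_{22}\in\mathbb{S}^r$ (same for $M$). The generalized Schur complement is $N\mid N_{22}:=N_{11}-N_{12}N_{22}^\dagger N_{21}$. The set $\boldsymbol{\Pi}_{q,r}$ consists of all $N\in\mathbb{S}^{q+r}$ with $N_{22}\le 0$, $N\mid N_{22}\ge 0$ and $\ker N_{22}\subseteq\ker N_{12}$. Define $\mathcal{Z}_r(\Pi)=\{Z\in\mathbb{R}^{r\times q}:\begin{bmatrix}I_q\\ Z\end{bmatrix}^\top\Pi\begin{bmatrix}I_q\\ Z\end{bmatrix}\ge 0\}$ and $\mathcal{Z}_r^+(\Pi)$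 the same with $>0$. *)

theory Defs
  imports "HOL-Analysis.Analysis"
begin

text \<open>Matrices in S^{q+r} are represented as real^('q+'r)^('q+'r), the index type being
  the disjoint sum of the index types of the two blocks (Inl = first q, Inr = last r).\<close>

definition sym_mat :: "real^'n^'n \<Rightarrow> bool" where
  "sym_mat A \<longleftrightarrow> transpose A = A"

definition psd :: "real^'n^'n \<Rightarrow> bool" where
  "psd A \<longleftrightarrow> (\<forall>x. 0 \<le> x \<bullet> (A *v x))"

definition pd :: "real^'n^'n \<Rightarrow> bool" where
  "pd A \<longleftrightarrow> (\<forall>x. x \<noteq> 0 \<longrightarrow> 0 < x \<bullet> (A *v x))"

definition nsd :: "real^'n^'n \<Rightarrow> bool" where
  "nsd A \<longleftrightarrow> (\<forall>x. x \<bullet> (A *v x) \<le> 0)"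

definition nd :: "real^'n^'n \<Rightarrow> bool" where
  "nd A \<longleftrightarrow> (\<forall>x. x \<noteq> 0 \<longrightarrow> x \<bullet> (A *v x) < 0)"

definition pinv :: "real^'n^'m \<Rightarrow> real^'m^'n" where
  "pinv A = (THE X. A ** X ** A = A \<and> X ** A ** X = X \<and>
                    transpose (A ** X) = A ** X \<and> transpose (X ** A) = X ** A)"

definition blk11 :: "real^('q::finite+'r::finite)^('q+'r) \<Rightarrow> real^'q^'q" where
  "blk11 N = (\<chi> i j. N $ Inl i $ Inl j)"
definition blk12 :: "real^('q::finite+'r::finite)^('q+'r) \<Rightarrow> real^'r^'q" where
  "blk12 N = (\<chi> i j. N $ Inl i $ Inr j)"
definition blk21 :: "real^('q::finite+'r::finite)^('q+'r) \<Rightarrow> real^'q^'r" where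
  "blk21 N = (\<chi> i j. N $ Inr i $ Inl j)"
definition blk22 :: "real^('q::finite+'r::finite)^('q+'r) \<Rightarrow> real^'r^'r" where
  "blk22 N = (\<chi> i j. N $ Inr i $ Inr j)"

definition schur :: "real^('q::finite+'r::finite)^('q+'r) \<Rightarrow> real^'q^'q" where
  "schur N = blk11 N - blk12 N ** pinv (blk22 N) ** blk21 N"

definition Pi_set :: "(real^('q::finite+'r::finite)^('q+'r)) set" where
  "Pi_set = {N. sym_mat N \<and> nsd (blk22 N) \<and> psd (schur N) \<and>
                {x. blk22 N *v x = 0} \<subseteq> {x. blk12 N *v x = 0}}"

text \<open>The (q+r) x q matrix [I_q; Z].\<close>
definition stackI :: "real^'q^'r \<Rightarrow> real^'q^('q+'r)" where
  "stackI Z = (\<chi> k j. case k of Inl i \<Rightarrow> (if i = j then 1 else 0) | Inr i \<Rightarrow> Z $ i $ j)"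

definition Zset :: "real^('q::finite+'r::finite)^('q+'r) \<Rightarrow> (real^'q^'r) set" where
  "Zset P = {Z. psd (transpose (stackI Z) ** P ** stackI Z)}"

definition Zset_pos :: "real^('q::finite+'r::finite)^('q+'r) \<Rightarrow> (real^'q^'r) set" where
  "Zset_pos P = {Z. pd (transpose (stackI Z) ** P ** stackI Z)}"

definition has_pos_eigenvalue :: "real^'n^'n \<Rightarrow> bool" where
  "has_pos_eigenvalue A \<longleftrightarrow> (\<exists>c v. 0 < c \<and> v \<noteq> 0 \<and> A *v v = c *\<^sub>R v)"

end

theory Submission
  imports Defs
begin


lemma mat_sub_rdistrib: "((A::real^'n^'m) - B) ** C = A ** C - B ** C"
  by (simp add: matrix_matrix_mult_def vec_eq_iff sum_subtractf algebra_simps)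
lemma mat_sub_ldistrib: "(C::real^'n^'m) ** (A - B) = C ** A - C ** B"
  by (simp add: matrix_matrix_mult_def vec_eq_iff sum_subtractf algebra_simps)
lemma mat_add_rdistrib: "((A::real^'n^'m) + B) ** C = A ** C + B ** C"
  by (simp add: matrix_matrix_mult_def vec_eq_iff sum.distrib algebra_simps)
lemma transpose_sub: "transpose ((A::real^'n^'m) - B) = transpose A - transpose B"
  by (simp add: transpose_def vec_eq_iff)

definition penrose :: "real^'n^'m \<Rightarrow> real^'m^'n \<Rightarrow> bool" where
  "penrose A X \<longleftrightarrow> A ** X ** A = A \<and> X ** A ** X = X \<and>
                    transpose (A ** X) = A ** X \<and> transpose (X ** A) = X ** A"

lemma penrose_unique:
  assumes "penrose A X" "penrose A Y" shows "X = Y"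
proof -
  have a1: "A ** X ** A = A" "X ** A ** X = X" "transpose (A ** X) = A ** X" "transpose (X ** A) = X ** A"
    using assms(1) by (auto simp: penrose_def)
  have b1: "A ** Y ** A = A" "Y ** A ** Y = Y" "transpose (A ** Y) = A ** Y" "transpose (Y ** A) = Y ** A"
    using assms(2) by (auto simp: penrose_def)
  have "X = X ** (A ** X)" using a1 by (simp add: matrix_mul_assoc)
  also have "\<dots> = X ** transpose X ** transpose A"
    using a1(3) by (metis matrix_transpose_mul matrix_mul_assoc)
  also have "transpose A = transpose A ** transpose Y ** transpose A"
    by (metis b1(1) matrix_transpose_mul matrix_mul_assoc)
  also have "X ** transpose X ** (transpose A ** transpose Y ** transpose A)
     = X ** (transpose X ** transpose A) ** (transpose Y ** transpose A)"
    by (simp add: matrix_mul_assoc)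
  also have "\<dots> = X ** (A ** X) ** (A ** Y)"
    by (metis a1(3) b1(3) matrix_transpose_mul)
  also have "\<dots> = (X ** A ** X) ** A ** Y" by (simp add: matrix_mul_assoc)
  finally have x: "X = X ** A ** Y" using a1 by (simp add: matrix_mul_assoc)
  have "Y = (Y ** A) ** Y" using b1 by (simp add: matrix_mul_assoc)
  also have "\<dots> = transpose A ** transpose Y ** Y"
    using b1(4) by (metis matrix_transpose_mul)
  also have "transpose A = transpose A ** transpose X ** transpose A"
    by (metis a1(1) matrix_transpose_mul matrix_mul_assoc)
  also have "(transpose A ** transpose X ** transpose A) ** transpose Y ** Y
     = (transpose A ** transpose X) ** (transpose A ** transpose Y) ** Y"
    by (simp add: matrix_mul_assoc)
  also have "\<dots> = (X ** A) ** (Y ** A) ** Y"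
    by (metis a1(4) b1(4) matrix_transpose_mul)
  also have "\<dots> = X ** A ** (Y ** A ** Y)" by (simp add: matrix_mul_assoc)
  finally have y: "Y = X ** A ** Y" using b1 by simp
  show ?thesis using x y by simp
qed

lemma penrose_exists_sym:
  fixes A :: "real^'n^'n"
  assumes sym: "transpose A = A"
  shows "\<exists>X. penrose A X"
proof -
  let ?K = "{x. A *v x = 0}"
  have sK: "subspace ?K"
    by (auto simp: subspace_def matrix_vector_right_distrib matrix_vector_mult_scaleR)
  obtain B where BK: "B \<subseteq> ?K" and orth: "pairwise orthogonal B" and nrm: "\<And>x. x \<in> B \<Longrightarrow> norm x = 1"
    and ind: "independent B" and spB: "span B = ?K"
    using orthonormal_basis_subspace[OF sK] by metis
  have fB: "finite B" using ind by (rule finiteI_independent)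
  define Q :: "real^'n^'n" where "Q = (\<chi> i j. \<Sum>b\<in>B. b$i * b$j)"
  have Qv: "Q *v x = (\<Sum>b\<in>B. (x \<bullet> b) *\<^sub>R b)" for x
    unfolding Q_def
    by (simp add: vec_eq_iff matrix_vector_mult_def inner_vec_def sum_distrib_left sum_distrib_right
          sum_component mult.commute mult.left_commute) (subst sum.swap, simp add: mult_ac)
  have QK: "Q *v x \<in> ?K" for x
  proof -
    have "(\<Sum>b\<in>B. (x \<bullet> b) *\<^sub>R b) \<in> span B"
      by (intro span_sum span_mul span_base) auto
    thus ?thesis using spB Qv by simp
  qed
  have Qid: "x \<in> ?K \<Longrightarrow> Q *v x = x" for x
    using orthonormal_basis_expand[OF orth nrm _ fB] spB Qv by auto
  have AQ: "A ** Q = 0"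
    by (simp add: matrix_eq matrix_vector_mul_assoc[symmetric]) (use QK in auto)
  have QA0: "Q *v (A *v x) = 0" for x
  proof -
    have "(A *v x) \<bullet> b = 0" if "b \<in> B" for b
    proof -
      have "(A *v x) \<bullet> b = x \<bullet> (transpose A *v b)"
        by (metis dot_lmul_matrix inner_commute transpose_matrix_vector transpose_transpose)
      thus ?thesis using sym that BK by auto
    qed
    thus ?thesis by (simp add: Qv)
  qed
  have QA: "Q ** A = 0"
    by (simp add: matrix_eq matrix_vector_mul_assoc[symmetric] QA0)
  have QQ: "Q ** Q = Q"
    by (simp add: matrix_eq matrix_vector_mul_assoc[symmetric]) (use QK Qid in auto)
  have QT: "transpose Q = Q"
    by (simp add: Q_def transpose_def vec_eq_iff mult.commute)
  define B' where "B' = A + Q"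
  have "\<forall>x. B' *v x = 0 \<longrightarrow> x = 0"
  proof (intro allI impI)
    fix x assume h: "B' *v x = 0"
    hence "Q *v (B' *v x) = 0" by simp
    hence "Q *v x = 0"
      by (simp add: B'_def matrix_vector_right_distrib matrix_vector_mult_add_rdistrib
          matrix_vector_mul_assoc QA QQ)
    moreover have "A *v x + Q *v x = 0" using h by (simp add: B'_def matrix_vector_mult_add_rdistrib)
    ultimately have "x \<in> ?K" by simp
    thus "x = 0" using Qid \<open>Q *v x = 0\<close> by metis
  qed
  then obtain C where CB: "C ** B' = mat 1"
    using matrix_left_invertible_ker by blast
  hence BC: "B' ** C = mat 1" using matrix_left_right_inverse by blast
  have B'Q: "B' ** Q = Q" by (simp add: B'_def mat_add_rdistrib AQ QQ)
  have QB': "Q ** B' = Q" by (simp add: B'_def matrix_add_ldistrib QA QQ)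
  have CQ: "C ** Q = Q" by (metis B'Q CB matrix_mul_assoc matrix_mul_lid)
  have QC: "Q ** C = Q" by (metis QB' BC matrix_mul_assoc matrix_mul_rid)
  have AB: "A = B' - Q" by (simp add: B'_def)
  define X where "X = C - Q"
  have AX: "A ** X = mat 1 - Q"
    by (simp add: AB X_def mat_sub_rdistrib mat_sub_ldistrib BC B'Q QC QQ)
  have XA: "X ** A = mat 1 - Q"
    by (simp add: AB X_def mat_sub_rdistrib mat_sub_ldistrib CB CQ QB' QQ)
  have "penrose A X"
    unfolding penrose_def
  proof (intro conjI)
    show "A ** X ** A = A" by (simp add: AX mat_sub_rdistrib QA)
    have "Q ** X = 0" by (simp add: X_def mat_sub_ldistrib QC QQ)
    thus "X ** A ** X = X" by (simp add: XA mat_sub_rdistrib)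
    show "transpose (A ** X) = A ** X" by (simp add: AX transpose_sub transpose_mat QT)
    show "transpose (X ** A) = X ** A" by (simp add: XA transpose_sub transpose_mat QT)
  qed
  thus ?thesis by blast
qed

lemma pinv_sym:
  fixes A :: "real^'n^'n"
  assumes sym: "transpose A = A"
  shows "penrose A (pinv A)" "transpose (pinv A) = pinv A"
proof -
  obtain X where X: "penrose A X" using penrose_exists_sym[OF sym] by blast
  have "pinv A = X" unfolding pinv_def
  proof (rule the_equality)
    show "A ** X ** A = A \<and> X ** A ** X = X \<and> transpose (A ** X) = A ** X \<and> transpose (X ** A) = X ** A"
      using X by (simp add: penrose_def)
    fix Y assume "A ** Y ** A = A \<and> Y ** A ** Y = Y \<and> transpose (A ** Y) = A ** Y \<and> transpose (Y ** A) = Y ** A"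
    hence "penrose A Y" by (simp add: penrose_def)
    thus "Y = X" using penrose_unique X by blast
  qed
  hence P: "penrose A (pinv A)" using X by simp
  thus "penrose A (pinv A)" .
  let ?P = "pinv A"
  have p: "A ** ?P ** A = A" "?P ** A ** ?P = ?P" "transpose (A ** ?P) = A ** ?P" "transpose (?P ** A) = ?P ** A"
    using P by (auto simp: penrose_def)
  have "transpose (A ** ?P ** A) = A ** transpose ?P ** A" by (simp add: matrix_transpose_mul sym matrix_mul_assoc)
  hence 1: "A ** transpose ?P ** A = A" using p(1) sym by simp
  have "transpose (?P ** A ** ?P) = transpose ?P ** A ** transpose ?P" by (simp add: matrix_transpose_mul sym matrix_mul_assoc)
  hence 2: "transpose ?P ** A ** transpose ?P = transpose ?P" using p(2) by simp
  have 3: "A ** transpose ?P = ?P ** A" using p(4) by (simp add: matrix_transpose_mul sym)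
  have 4: "transpose ?P ** A = A ** ?P" using p(3) by (simp add: matrix_transpose_mul sym)
  have "penrose A (transpose ?P)" unfolding penrose_def
    using 1 2 3 4 p(3,4) by simp
  thus "transpose (pinv A) = pinv A" using penrose_unique P by blast
qed


definition join :: "real^'q \<Rightarrow> real^'r \<Rightarrow> real^('q::finite+'r::finite)" where
  "join a b = (\<chi> k. case k of Inl i \<Rightarrow> a$i | Inr i \<Rightarrow> b$i)"
definition fstp :: "real^('q::finite+'r::finite) \<Rightarrow> real^'q" where
  "fstp x = (\<chi> i. x $ Inl i)"
definition sndp :: "real^('q::finite+'r::finite) \<Rightarrow> real^'r" where
  "sndp x = (\<chi> i. x $ Inr i)"

lemma sum_UNIV_sum:
  "(\<Sum>k\<in>(UNIV::('a::finite+'b::finite) set). f k) = (\<Sum>i\<in>UNIV. f (Inl i)) + (\<Sum>i\<in>UNIV. f (Inr i))"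
  using sum.Plus[of "UNIV::'a set" "UNIV::'b set" f] by (simp add: UNIV_Plus_UNIV comp_def)

lemma join_split: "join (fstp x) (sndp x) = x"
  by (simp add: join_def fstp_def sndp_def vec_eq_iff split: sum.split)

lemma fstp_join[simp]: "fstp (join a b) = a" and sndp_join[simp]: "sndp (join a b) = b"
  by (simp_all add: join_def fstp_def sndp_def vec_eq_iff)

lemma inner_join: "join a b \<bullet> join c d = a \<bullet> c + b \<bullet> d"
  unfolding inner_vec_def join_def by (simp only: vec_lambda_beta sum_UNIV_sum) simp

lemma mv_join:
  fixes N :: "real^('q::finite+'r::finite)^('q+'r)"
  shows "N *v join a b = join (blk11 N *v a + blk12 N *v b) (blk21 N *v a + blk22 N *v b)"
  unfolding vec_eq_iff
proof
  fix k show "(N *v join a b) $ k = join (blk11 N *v a + blk12 N *v b) (blk21 N *v a + blk22 N *v b) $ k"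
  proof (cases k)
    case (Inl i) thus ?thesis
      unfolding matrix_vector_mult_def join_def blk11_def blk12_def
      by (simp only: vec_lambda_beta sum_UNIV_sum) simp
  next
    case (Inr i) thus ?thesis
      unfolding matrix_vector_mult_def join_def blk21_def blk22_def
      by (simp only: vec_lambda_beta sum_UNIV_sum) simp
  qed
qed

lemma quad_join:
  fixes N :: "real^('q::finite+'r::finite)^('q+'r)"
  shows "join a b \<bullet> (N *v join a b) =
     a \<bullet> (blk11 N *v a) + a \<bullet> (blk12 N *v b) + b \<bullet> (blk21 N *v a) + b \<bullet> (blk22 N *v b)"
  by (simp add: mv_join inner_join inner_add_right)

lemma delta_sum: "(\<Sum>j\<in>UNIV. (if i = j then 1 else 0) * (a::real^'n)$j) = a$i"
  by (subst sum.cong[OF refl, of _ _ "\<lambda>j. if i = j then a$j else 0"]) auto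

lemma stack_mv: "stackI Z *v a = join a (Z *v a)"
  unfolding vec_eq_iff
proof
  fix k show "(stackI Z *v a) $ k = join a (Z *v a) $ k"
    by (cases k) (simp_all add: stackI_def join_def matrix_vector_mult_def delta_sum)
qed

lemma inner_mv_transpose: "x \<bullet> ((B::real^'n^'m) *v y) = (transpose B *v x) \<bullet> y"
  using dot_lmul_matrix[of x B y] transpose_matrix_vector[of B x] by simp

lemma quad_stack:
  "a \<bullet> ((transpose (stackI Z) ** P ** stackI Z) *v a) = join a (Z *v a) \<bullet> (P *v join a (Z *v a))"
proof -
  have "(transpose (stackI Z) ** P ** stackI Z) *v a = transpose (stackI Z) *v (P *v (stackI Z *v a))"
    by (simp add: matrix_vector_mul_assoc matrix_mul_assoc)
  hence "a \<bullet> ((transpose (stackI Z) ** P ** stackI Z) *v a) = (stackI Z *v a) \<bullet> (P *v (stackI Z *v a))"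
    by (metis inner_mv_transpose transpose_transpose)
  thus ?thesis by (simp only: stack_mv)
qed

lemma Zset_iff: "Z \<in> Zset P \<longleftrightarrow> (\<forall>a. 0 \<le> join a (Z *v a) \<bullet> (P *v join a (Z *v a)))"
  unfolding Zset_def psd_def quad_stack by simp

lemma Zset_pos_iff: "Z \<in> Zset_pos P \<longleftrightarrow> (\<forall>a. a \<noteq> 0 \<longrightarrow> 0 < join a (Z *v a) \<bullet> (P *v join a (Z *v a)))"
  unfolding Zset_pos_def pd_def quad_stack by simp



lemma sym_blocks:
  fixes N :: "real^('q::finite+'r::finite)^('q+'r)"
  assumes "sym_mat N"
  shows "transpose (blk12 N) = blk21 N" "transpose (blk22 N) = blk22 N" "transpose (blk11 N) = blk11 N"
proof -
  have e: "N $ i $ j = N $ j $ i" for i j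
  proof -
    have "(transpose N) $ i $ j = N $ j $ i" by (simp add: transpose_def)
    thus ?thesis using assms by (simp add: sym_mat_def)
  qed
  show "transpose (blk12 N) = blk21 N" "transpose (blk22 N) = blk22 N" "transpose (blk11 N) = blk11 N"
    by (simp_all add: transpose_def blk11_def blk12_def blk21_def blk22_def vec_eq_iff e)
qed

lemma decomp:
  fixes A :: "real^'q^'q" and B :: "real^'r^'q" and C :: "real^'q^'r" and D P :: "real^'r^'r"
  assumes sD: "transpose D = D" and BC: "transpose B = C" and DPC: "D ** P ** C = C"
  shows "a \<bullet> (A *v a) + a \<bullet> (B *v b) + b \<bullet> (C *v a) + b \<bullet> (D *v b) =
         a \<bullet> ((A - B ** P ** C) *v a) + (b + P *v (C *v a)) \<bullet> (D *v (b + P *v (C *v a)))"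
proof -
  define c where "c = C *v a"
  define u where "u = P *v c"
  have Du: "D *v u = c" unfolding u_def c_def
    using DPC by (simp add: matrix_vector_mul_assoc matrix_mul_assoc)
  have 1: "a \<bullet> (B *v b) = b \<bullet> c"
    using inner_mv_transpose[of a B b] BC by (simp add: c_def inner_commute)
  have 2: "a \<bullet> ((B ** P ** C) *v a) = c \<bullet> u"
    using inner_mv_transpose[of a B u] BC
    by (simp add: c_def u_def matrix_vector_mul_assoc[symmetric] matrix_mul_assoc)
  have 3: "u \<bullet> (D *v b) = b \<bullet> c"
    using inner_mv_transpose[of u D b] sD Du by (simp add: inner_commute)
  have "(b + u) \<bullet> (D *v (b + u)) = b \<bullet> (D *v b) + b \<bullet> c + b \<bullet> c + u \<bullet> c"
    using 3 Du by (simp add: matrix_vector_right_distrib inner_add_left inner_add_right inner_commute)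
  thus ?thesis
    using 1 2 by (simp add: c_def[symmetric] u_def[symmetric] matrix_vector_mult_diff_rdistrib
        inner_diff_right inner_commute)
qed

lemma real_lin_quad:
  fixes g h :: real
  assumes "\<forall>t. t * (2 * g) + t^2 * h \<le> 0"
  shows "g = 0"
proof (rule ccontr)
  assume g: "g \<noteq> 0"
  define k where "k = \<bar>h\<bar> + 1"
  define t where "t = g / k"
  have p: "k > 0" "2 * k + h > 0" by (auto simp: k_def abs_if)
  have "t * (2 * g) + t^2 * h = g^2 * (2 * k + h) / k^2"
    using p by (simp add: t_def field_simps power2_eq_square)
  moreover have "g^2 * (2 * k + h) / k^2 > 0"
    using g p by (intro divide_pos_pos mult_pos_pos) auto
  ultimately show False using assms by (metis not_le)
qed

lemma real_cs:
  fixes s c g :: real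
  assumes "0 < s" "\<forall>t. 0 \<le> c + 2 * t * g + t^2 * s"
  shows "g^2 \<le> s * c"
proof -
  have "0 \<le> c + 2 * (- g / s) * g + (- g / s)^2 * s" using assms(2) by blast
  also have "\<dots> = (s * c - g^2) / s" using assms(1) by (simp add: field_simps power2_eq_square)
  finally show ?thesis using assms(1) by (simp add: divide_nonneg_pos zero_le_divide_iff)
qed

lemma quad_expand:
  fixes M :: "real^'n^'n"
  assumes "transpose M = M"
  shows "(x + t *\<^sub>R y) \<bullet> (M *v (x + t *\<^sub>R y)) = x \<bullet> (M *v x) + 2 * t * (x \<bullet> (M *v y)) + t^2 * (y \<bullet> (M *v y))"
proof -
  have "y \<bullet> (M *v x) = x \<bullet> (M *v y)"
    using inner_mv_transpose[of y M x] assms by (simp add: inner_commute)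
  thus ?thesis
    by (simp add: matrix_vector_right_distrib matrix_vector_mult_scaleR inner_add_left inner_add_right
        algebra_simps power2_eq_square)
qed

lemma nsd_zero:
  fixes D :: "real^'n^'n"
  assumes sD: "transpose D = D" and n: "nsd D" and z: "b \<bullet> (D *v b) = 0"
  shows "D *v b = 0"
proof -
  have "\<forall>t. t * (2 * ((D *v b) \<bullet> (D *v b))) + t^2 * ((D *v b) \<bullet> (D *v (D *v b))) \<le> 0"
  proof
    fix t
    have "(b + t *\<^sub>R (D *v b)) \<bullet> (D *v (b + t *\<^sub>R (D *v b))) \<le> 0" using n by (simp add: nsd_def)
    thus "t * (2 * ((D *v b) \<bullet> (D *v b))) + t^2 * ((D *v b) \<bullet> (D *v (D *v b))) \<le> 0"
      using quad_expand[OF sD, of b t "D *v b"] z inner_mv_transpose[of b D "D *v b"] sD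
      by (simp add: inner_commute algebra_simps power2_eq_square)
  qed
  hence "(D *v b) \<bullet> (D *v b) = 0" by (rule real_lin_quad)
  thus ?thesis by simp
qed

definition outer :: "real^'m \<Rightarrow> real^'n \<Rightarrow> real^'n^'m" where
  "outer w e = (\<chi> i j. w$i * e$j)"

lemma outer_mv: "outer w e *v z = (e \<bullet> z) *\<^sub>R w"
  by (simp add: outer_def vec_eq_iff matrix_vector_mult_def inner_vec_def sum_distrib_left mult_ac)

lemma Pi_facts:
  fixes N :: "real^('q::finite+'r::finite)^('q+'r)"
  assumes symN: "sym_mat N" and Pi: "N \<in> Pi_set"
  shows "blk22 N ** pinv (blk22 N) ** blk21 N = blk21 N"
    and "transpose (schur N) = schur N"
    and "\<And>x y. join x y \<bullet> (N *v join x y) = x \<bullet> (schur N *v x)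
            + (y + pinv (blk22 N) *v (blk21 N *v x)) \<bullet> (blk22 N *v (y + pinv (blk22 N) *v (blk21 N *v x)))"
proof -
  let ?A = "blk11 N" and ?B = "blk12 N" and ?C = "blk21 N" and ?D = "blk22 N" and ?P = "pinv (blk22 N)"
  have sB: "transpose ?B = ?C" "transpose ?D = ?D" "transpose ?A = ?A" using sym_blocks[OF symN] by auto
  have pen: "penrose ?D ?P" "transpose ?P = ?P" using pinv_sym[OF sB(2)] by auto
  have DPD: "?D ** ?P ** ?D = ?D" using pen(1) by (simp add: penrose_def)
  have ker: "\<And>x. ?D *v x = 0 \<Longrightarrow> ?B *v x = 0" using Pi by (auto simp: Pi_set_def)
  have "?B = ?B ** ?P ** ?D"
    unfolding matrix_eq
  proof
    fix y
    have "?D *v (y - (?P ** ?D) *v y) = 0"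
      using DPD by (simp add: matrix_vector_mult_diff_distrib matrix_vector_mul_assoc matrix_mul_assoc)
    hence "?B *v (y - (?P ** ?D) *v y) = 0" by (rule ker)
    thus "?B *v y = ?B ** ?P ** ?D *v y"
      by (simp add: matrix_vector_mult_diff_distrib matrix_vector_mul_assoc matrix_mul_assoc)
  qed
  hence "transpose ?B = transpose (?B ** ?P ** ?D)" by simp
  hence DPC: "?D ** ?P ** ?C = ?C" using sB pen(2) by (simp add: matrix_transpose_mul matrix_mul_assoc)
  thus "?D ** ?P ** ?C = ?C" .
  have "transpose ?C = ?B" using sB(1) by (metis transpose_transpose)
  thus "transpose (schur N) = schur N"
    using sB pen(2) by (simp add: schur_def transpose_sub matrix_transpose_mul matrix_mul_assoc)
  fix x y
  show "join x y \<bullet> (N *v join x y) = x \<bullet> (schur N *v x)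
            + (y + ?P *v (?C *v x)) \<bullet> (?D *v (y + ?P *v (?C *v x)))"
    unfolding quad_join schur_def by (rule decomp[OF sB(2) sB(1) DPC])
qed

lemma construct:
  fixes N :: "real^('q::finite+'r::finite)^('q+'r)"
  assumes symN: "sym_mat N" and Pi: "N \<in> Pi_set" and a0: "a \<noteq> 0"
    and q: "0 \<le> join a b \<bullet> (N *v join a b)"
  shows "\<exists>Z. Z *v a = b \<and> Z \<in> Zset N"
proof -
  let ?C = "blk21 N" and ?D = "blk22 N" and ?P = "pinv (blk22 N)" and ?S = "schur N"
  have sS: "transpose ?S = ?S" and dec: "\<And>x y. join x y \<bullet> (N *v join x y) = x \<bullet> (?S *v x)
            + (y + ?P *v (?C *v x)) \<bullet> (?D *v (y + ?P *v (?C *v x)))"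
    using Pi_facts[OF symN Pi] by auto
  have psdS: "psd ?S" and nsdD: "nsd ?D" using Pi by (auto simp: Pi_set_def)
  define w where "w = b + ?P *v (?C *v a)"
  define s where "s = a \<bullet> (?S *v a)"
  have sw: "0 \<le> s + w \<bullet> (?D *v w)" using q dec[of a b] by (simp add: s_def w_def)
  have s0: "0 \<le> s" using psdS by (simp add: psd_def s_def)
  have wD: "w \<bullet> (?D *v w) \<le> 0" using nsdD by (simp add: nsd_def)
  have symS: "z \<bullet> (?S *v a) = a \<bullet> (?S *v z)" for z
    using inner_mv_transpose[of z ?S a] sS by (simp add: inner_commute)
  obtain e where ea: "e \<bullet> a = 1" and good: "\<And>z. 0 \<le> z \<bullet> (?S *v z) + (e \<bullet> z)^2 * (w \<bullet> (?D *v w))"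
  proof (cases "s > 0")
    case True
    define e where "e = (1/s) *\<^sub>R (?S *v a)"
    have "e \<bullet> a = 1" using True by (simp add: e_def s_def inner_commute)
    moreover have "0 \<le> z \<bullet> (?S *v z) + (e \<bullet> z)^2 * (w \<bullet> (?D *v w))" for z
    proof -
      have cs: "(a \<bullet> (?S *v z))^2 \<le> s * (z \<bullet> (?S *v z))"
      proof (rule real_cs[OF True], intro allI)
        fix t
        have "0 \<le> (z + t *\<^sub>R a) \<bullet> (?S *v (z + t *\<^sub>R a))" using psdS by (simp add: psd_def)
        thus "0 \<le> z \<bullet> (?S *v z) + 2 * t * (a \<bullet> (?S *v z)) + t^2 * s"
          using quad_expand[OF sS, of z t a] symS[of z] by (simp add: s_def)
      qed
      have ez: "e \<bullet> z = (a \<bullet> (?S *v z)) / s" using symS[of z] by (simp add: e_def inner_commute)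
      have "(e \<bullet> z)^2 * (w \<bullet> (?D *v w)) \<ge> (e \<bullet> z)^2 * (- s)"
        using sw by (intro mult_left_mono) auto
      also have "(e \<bullet> z)^2 * (- s) = - ((a \<bullet> (?S *v z))^2 / s)"
        using True by (simp add: ez power_divide power2_eq_square)
      also have "\<dots> \<ge> - (z \<bullet> (?S *v z))"
        using cs True by (simp add: divide_le_eq mult.commute)
      finally show ?thesis by simp
    qed
    ultimately show ?thesis using that by blast
  next
    case False
    hence "s = 0" using s0 by simp
    hence w0: "w \<bullet> (?D *v w) = 0" using sw wD by simp
    define e where "e = (1 / (a \<bullet> a)) *\<^sub>R a"
    have "e \<bullet> a = 1" using a0 by (simp add: e_def)
    moreover have "0 \<le> z \<bullet> (?S *v z) + (e \<bullet> z)^2 * (w \<bullet> (?D *v w))" for z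
      using psdS w0 by (simp add: psd_def)
    ultimately show ?thesis using that by blast
  qed
  define Z where "Z = outer w e - ?P ** ?C"
  have Zz: "Z *v z = (e \<bullet> z) *\<^sub>R w - ?P *v (?C *v z)" for z
    by (simp add: Z_def outer_mv matrix_vector_mult_diff_rdistrib matrix_vector_mul_assoc)
  have "Z *v a = b" using ea by (simp add: Zz w_def)
  moreover have "Z \<in> Zset N"
    unfolding Zset_iff
  proof
    fix z
    have "join z (Z *v z) \<bullet> (N *v join z (Z *v z)) = z \<bullet> (?S *v z) + (e \<bullet> z)^2 * (w \<bullet> (?D *v w))"
      by (simp add: dec Zz matrix_vector_mult_scaleR power2_eq_square)
    thus "0 \<le> join z (Z *v z) \<bullet> (N *v join z (Z *v z))" using good[of z] by simp
  qed
  ultimately show ?thesis by blast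
qed



lemma real_limit0:
  fixes a b c :: real
  assumes "\<forall>e>0. 0 \<le> a + 2 * e * b + e^2 * c"
  shows "0 \<le> a"
proof (rule ccontr)
  assume "\<not> 0 \<le> a" hence a: "a < 0" by simp
  define K where "K = 2 * (\<bar>b\<bar> + \<bar>c\<bar> + 1)"
  have K: "K > 0" by (simp add: K_def add_pos_nonneg)
  define e where "e = min 1 (- a / K)"
  have e0: "e > 0" using a K by (simp add: e_def divide_neg_pos)
  have e1: "e \<le> 1" by (simp add: e_def)
  have eK: "e * K \<le> - a" using K by (simp add: e_def min_def field_simps split: if_splits)
  have "2 * e * b \<le> 2 * e * \<bar>b\<bar>" using e0 by (simp add: mult_left_mono)
  moreover have "e^2 * c \<le> e * \<bar>c\<bar>"
  proof -
    have "e^2 * c \<le> e^2 * \<bar>c\<bar>" by (simp add: mult_left_mono)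
    also have "\<dots> \<le> e * \<bar>c\<bar>" using e0 e1 by (simp add: power2_eq_square mult_right_mono)
    finally show ?thesis .
  qed
  moreover have "2 * e * \<bar>b\<bar> + e * \<bar>c\<bar> < e * K" 
  proof -
    have "2 * \<bar>b\<bar> + \<bar>c\<bar> < K" by (simp add: K_def)
    hence "e * (2 * \<bar>b\<bar> + \<bar>c\<bar>) < e * K" using e0 by (rule mult_strict_left_mono)
    thus ?thesis by (simp add: algebra_simps)
  qed
  ultimately have "a + 2 * e * b + e^2 * c < 0" using eK by linarith
  thus False using assms e0 by (meson not_le)
qed

lemma join_zero: "join 0 0 = 0"
  by (simp add: join_def vec_eq_iff split: sum.split)

lemma fstp_add: "fstp (x + e *\<^sub>R v) = fstp x + e *\<^sub>R fstp v"
  by (simp add: fstp_def vec_eq_iff)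

theorem mainTheorem7:
  fixes M N :: "real^('q::finite + 'r::finite)^('q + 'r)"
  assumes "sym_mat M" and "sym_mat N" and "N \<in> Pi_set"
  shows "(has_pos_eigenvalue N \<longrightarrow>
            (Zset N \<subseteq> Zset M \<longleftrightarrow> (\<forall>x. 0 \<le> x \<bullet> (N *v x) \<longrightarrow> 0 \<le> x \<bullet> (M *v x))))
       \<and> (nd (blk22 N) \<longrightarrow>
            (Zset N \<subseteq> Zset_pos M \<longleftrightarrow>
               (\<forall>x. x \<noteq> 0 \<and> 0 \<le> x \<bullet> (N *v x) \<longrightarrow> 0 < x \<bullet> (M *v x))))"
proof -
  note symM = assms(1) and symN = assms(2) and Pi = assms(3)
  have tM: "transpose M = M" and tN: "transpose N = N" using symM symN by (auto simp: sym_mat_def)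
  have tD: "transpose (blk22 N) = blk22 N" using sym_blocks[OF symN] by simp
  have nsdD: "nsd (blk22 N)" using Pi by (simp add: Pi_set_def)
  have ker: "\<And>x. blk22 N *v x = 0 \<Longrightarrow> blk12 N *v x = 0" using Pi by (auto simp: Pi_set_def)
  have q0: "join 0 y \<bullet> (P *v join 0 y) = y \<bullet> (blk22 P *v y)" for y and P :: "real^('q + 'r)^('q + 'r)"
    by (simp add: quad_join)
  have partA: "Zset N \<subseteq> Zset M \<longleftrightarrow> (\<forall>x. 0 \<le> x \<bullet> (N *v x) \<longrightarrow> 0 \<le> x \<bullet> (M *v x))"
    if hpe: "has_pos_eigenvalue N"
  proof
    assume inc: "Zset N \<subseteq> Zset M"
    have H: "0 \<le> x \<bullet> (M *v x)" if h1: "0 \<le> x \<bullet> (N *v x)" and h2: "fstp x \<noteq> 0" for x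
    proof -
      have xj: "x = join (fstp x) (sndp x)" by (simp add: join_split)
      obtain Z where Z: "Z *v fstp x = sndp x" "Z \<in> Zset N"
        using construct[OF symN Pi h2, of "sndp x"] h1 xj by auto
      hence "Z \<in> Zset M" using inc by auto
      hence "0 \<le> join (fstp x) (Z *v fstp x) \<bullet> (M *v join (fstp x) (Z *v fstp x))"
        by (simp add: Zset_iff)
      thus ?thesis using Z(1) xj by simp
    qed
    show "\<forall>x. 0 \<le> x \<bullet> (N *v x) \<longrightarrow> 0 \<le> x \<bullet> (M *v x)"
    proof (intro allI impI)
      fix x assume qx: "0 \<le> x \<bullet> (N *v x)"
      show "0 \<le> x \<bullet> (M *v x)"
      proof (cases "fstp x = 0")
        case False thus ?thesis using H qx by blast
      next
        case True
        define y where "y = sndp x"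
        have xj: "x = join 0 y" using join_split[of x] True by (simp add: y_def)
        have "y \<bullet> (blk22 N *v y) = 0" using qx nsdD q0[of y N] xj by (simp add: nsd_def order_antisym)
        hence Dy: "blk22 N *v y = 0" by (rule nsd_zero[OF tD nsdD])
        hence "blk12 N *v y = 0" by (rule ker)
        hence Nx: "N *v x = 0" using Dy xj by (simp add: mv_join join_zero)
        obtain c v where cv: "0 < c" "v \<noteq> 0" "N *v v = c *\<^sub>R v"
          using hpe by (auto simp: has_pos_eigenvalue_def)
        have Qv: "0 < v \<bullet> (N *v v)" using cv by (simp add: inner_commute)
        have fv: "fstp v \<noteq> 0"
        proof
          assume f0: "fstp v = 0"
          have "v = join 0 (sndp v)" using join_split[of v] f0 by simp
          hence "v \<bullet> (N *v v) = sndp v \<bullet> (blk22 N *v sndp v)" using q0 by metis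
          thus False using Qv nsdD by (simp add: nsd_def not_less[symmetric])
        qed
        have xNv: "x \<bullet> (N *v v) = 0"
          using inner_mv_transpose[of x N v] tN Nx by simp
        have "\<forall>e>0. 0 \<le> x \<bullet> (M *v x) + 2 * e * (x \<bullet> (M *v v)) + e^2 * (v \<bullet> (M *v v))"
        proof (intro allI impI)
          fix e :: real assume e: "e > 0"
          have "(x + e *\<^sub>R v) \<bullet> (N *v (x + e *\<^sub>R v)) = e^2 * (v \<bullet> (N *v v))"
            using quad_expand[OF tN, of x e v] Nx xNv by simp
          hence "0 \<le> (x + e *\<^sub>R v) \<bullet> (N *v (x + e *\<^sub>R v))" using Qv by simp
          moreover have "fstp (x + e *\<^sub>R v) \<noteq> 0" using True fv e by (simp add: fstp_add)
          ultimately have "0 \<le> (x + e *\<^sub>R v) \<bullet> (M *v (x + e *\<^sub>R v))" by (rule H)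
          thus "0 \<le> x \<bullet> (M *v x) + 2 * e * (x \<bullet> (M *v v)) + e^2 * (v \<bullet> (M *v v))"
            using quad_expand[OF tM, of x e v] by simp
        qed
        thus ?thesis by (rule real_limit0)
      qed
    qed
  next
    assume imp: "\<forall>x. 0 \<le> x \<bullet> (N *v x) \<longrightarrow> 0 \<le> x \<bullet> (M *v x)"
    show "Zset N \<subseteq> Zset M" using imp by (auto simp: Zset_iff)
  qed
  have partB: "Zset N \<subseteq> Zset_pos M \<longleftrightarrow> (\<forall>x. x \<noteq> 0 \<and> 0 \<le> x \<bullet> (N *v x) \<longrightarrow> 0 < x \<bullet> (M *v x))"
    if ndD: "nd (blk22 N)"
  proof
    assume inc: "Zset N \<subseteq> Zset_pos M"
    show "\<forall>x. x \<noteq> 0 \<and> 0 \<le> x \<bullet> (N *v x) \<longrightarrow> 0 < x \<bullet> (M *v x)"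
    proof (intro allI impI, elim conjE)
      fix x assume x0: "x \<noteq> 0" and qx: "0 \<le> x \<bullet> (N *v x)"
      have xj: "x = join (fstp x) (sndp x)" by (simp add: join_split)
      have f0: "fstp x \<noteq> 0"
      proof
        assume f: "fstp x = 0"
        hence xj0: "x = join 0 (sndp x)" using xj by simp
        hence "sndp x \<noteq> 0" using x0 join_zero by metis
        hence "sndp x \<bullet> (blk22 N *v sndp x) < 0" using ndD by (simp add: nd_def)
        thus False using qx q0[of "sndp x" N] xj0 by simp
      qed
      obtain Z where Z: "Z *v fstp x = sndp x" "Z \<in> Zset N"
        using construct[OF symN Pi f0, of "sndp x"] qx xj by auto
      hence "Z \<in> Zset_pos M" using inc by auto
      hence "0 < join (fstp x) (Z *v fstp x) \<bullet> (M *v join (fstp x) (Z *v fstp x))"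
        using f0 by (simp add: Zset_pos_iff)
      thus "0 < x \<bullet> (M *v x)" using Z(1) xj by simp
    qed
  next
    assume imp: "\<forall>x. x \<noteq> 0 \<and> 0 \<le> x \<bullet> (N *v x) \<longrightarrow> 0 < x \<bullet> (M *v x)"
    show "Zset N \<subseteq> Zset_pos M"
    proof
      fix Z assume "Z \<in> Zset N"
      hence zn: "\<forall>a. 0 \<le> join a (Z *v a) \<bullet> (N *v join a (Z *v a))" by (simp add: Zset_iff)
      show "Z \<in> Zset_pos M" unfolding Zset_pos_iff
      proof (intro allI impI)
        fix a :: "real^'q" assume a0: "a \<noteq> 0"
        have "join a (Z *v a) \<noteq> 0" using a0 fstp_join[of a "Z *v a"] by (metis fstp_join join_zero)
        thus "0 < join a (Z *v a) \<bullet> (M *v join a (Z *v a))" using imp zn by blast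
      qed
    qed
  qed
  show ?thesis using partA partB by blast
qed

end
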